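(* Let $I$ be a set and $\mathcal{E}=(E_i)_{i\in I}$ a family of nonempty sets. Then there exists a choice of the sets $E_i$ (i.e. a family $\mathcal{E}=(E_i)_{i\in I}$ of nonempty sets) such that for every integral connective structure $\mathcal{K}$ on $I$ there exists a multiple relation $R$ in $\mathcal{E}$ whose connective structure satisfies $\mathcal{K}_R=\mathcal{K}$.
   Context: For $J\subseteq I$ let $Z_J=\prod_{j\in J}E_j$ (its elements, the $J$-families, are maps $x:J\to\bigcup_i E_i$ with $x_j\in E_j$; $Z_\emptyset=\{\bullet\}$). A multiple relation in $\mathcal{E}$ is a pair $R=(J_R,G_R)$ with $J_R\subseteq I$ (the domain) and $G_R\subseteq Z_{J_R}$ (the graph); write $x\in R$ for $x\in G_R$. For $K\subseteq J_R$ the restriction is $R_{|K}=(K,\{x_{|K}:x\in G_R\})$, where $x_{|K}$ is the restriction of the map $x$ to $K$. The product of relations is $R\bowtie S=(J_R\cup J_S,\{x\in Z_{J_R\cup J_S}: x_{|J_R}\in G_R,\ x_{|J_S}\in G_S\})$. A bipartition of a set $J$ is a pair $(K,L)$ of nonempty disjoint subsets with $K\cup L=J$. A relation $T$ is scindable (splittable) if there is a bipartition $(K,L)$ of $J_T$ and relations $R,S$ with $J_R=K$, $J_S=L$ and $T=R\bowtie S$. A subset $J\subseteq J_R$ is scindable for $R$ if $R_{|J}$ is scindable. The connective structure of $R$ is $\mathcal{K}_R=\{J\subseteq J_R : J \text{ is not scindable for } R\}$. A connective structure on a set $X$ is a set $\mathcal{K}$ of subsets of $X$ such that for every $\mathcal{I}\subseteq\mathcal{K}$,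 if $\bigcap_{K\in\mathcal{I}}K\neq\emptyset$ then $\bigcup_{K\in\mathcal{I}}K\in\mathcal{K}$ (in particular $\emptyset\in\mathcal{K}$); it is integral if $\{x\}\in\mathcal{K}$ for all $x\in X$. The axiom of choice is not assumed. *)

theory Defs
  imports "HOL-Library.FuncSet"
begin

text \<open>J-families are extensional maps (value undefined outside J): Z_J = PiE J E.
  A multiple relation is a pair (domain, graph).\<close>

type_synonym ('i, 'e) mrel = "'i set \<times> ('i \<Rightarrow> 'e) set"

definition Zfam :: "('i \<Rightarrow> 'e set) \<Rightarrow> 'i set \<Rightarrow> ('i \<Rightarrow> 'e) set" where
  "Zfam E J = PiE J E"

definition dom_rel :: "('i, 'e) mrel \<Rightarrow> 'i set" where
  "dom_rel R = fst R"

definition graph_rel :: "('i, 'e) mrel \<Rightarrow> ('i \<Rightarrow> 'e) set" where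
  "graph_rel R = snd R"

definition is_mrel :: "'i set \<Rightarrow> ('i \<Rightarrow> 'e set) \<Rightarrow> ('i, 'e) mrel \<Rightarrow> bool" where
  "is_mrel I E R \<longleftrightarrow> dom_rel R \<subseteq> I \<and> graph_rel R \<subseteq> Zfam E (dom_rel R)"

definition restr_rel :: "('i, 'e) mrel \<Rightarrow> 'i set \<Rightarrow> ('i, 'e) mrel" where
  "restr_rel R K = (K, (\<lambda>x. restrict x K) ` graph_rel R)"

definition prod_rel :: "('i \<Rightarrow> 'e set) \<Rightarrow> ('i, 'e) mrel \<Rightarrow> ('i, 'e) mrel \<Rightarrow> ('i, 'e) mrel" where
  "prod_rel E R S = (dom_rel R \<union> dom_rel S,
     {x \<in> Zfam E (dom_rel R \<union> dom_rel S).
        restrict x (dom_rel R) \<in> graph_rel R \<and> restrict x (dom_rel S) \<in> graph_rel S})"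

definition bipartition :: "'a set \<Rightarrow> 'a set \<Rightarrow> 'a set \<Rightarrow> bool" where
  "bipartition J K L \<longleftrightarrow> K \<noteq> {} \<and> L \<noteq> {} \<and> K \<inter> L = {} \<and> K \<union> L = J"

definition scindable :: "'i set \<Rightarrow> ('i \<Rightarrow> 'e set) \<Rightarrow> ('i, 'e) mrel \<Rightarrow> bool" where
  "scindable I E T \<longleftrightarrow> (\<exists>K L R S. bipartition (dom_rel T) K L \<and>
      is_mrel I E R \<and> is_mrel I E S \<and> dom_rel R = K \<and> dom_rel S = L \<and>
      T = prod_rel E R S)"

definition conn_struct_of :: "'i set \<Rightarrow> ('i \<Rightarrow> 'e set) \<Rightarrow> ('i, 'e) mrel \<Rightarrow> 'i set set" where
  "conn_struct_of I E R = {J. J \<subseteq> dom_rel R \<and> \<not> scindable I E (restr_rel R J)}"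

definition connective_structure :: "'a set \<Rightarrow> 'a set set \<Rightarrow> bool" where
  "connective_structure X \<K> \<longleftrightarrow> \<K> \<subseteq> Pow X \<and>
     (\<forall>\<I>. \<I> \<subseteq> \<K> \<longrightarrow> \<Inter>\<I> \<noteq> {} \<longrightarrow> \<Union>\<I> \<in> \<K>)"

definition integral_connective_structure :: "'a set \<Rightarrow> 'a set set \<Rightarrow> bool" where
  "integral_connective_structure X \<K> \<longleftrightarrow> connective_structure X \<K> \<and> (\<forall>x\<in>X. {x} \<in> \<K>)"

end

theory Submission
  imports Defs
begin

definition GG :: "'i set set \<Rightarrow> 'i set \<Rightarrow> ('i \<Rightarrow> 'i set set) set" where
  "GG K J = {y \<in> PiE J (\<lambda>_. UNIV). \<forall>C\<in>K-{{}}. C \<subseteq> J \<longrightarrow> (\<exists>i\<in>C. C \<notin> y i)}"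

lemma GG_mem: "y \<in> GG K J \<Longrightarrow> C \<in> K-{{}} \<Longrightarrow> C \<subseteq> J \<Longrightarrow> \<exists>i\<in>C. C \<notin> y i"
  unfolding GG_def by blast

lemma GG_restr:
  assumes "J \<subseteq> I"
  shows "(\<lambda>x. restrict x J) ` GG K I = GG K J"
proof
  show "(\<lambda>x. restrict x J) ` GG K I \<subseteq> GG K J"
  proof
    fix z assume "z \<in> (\<lambda>x. restrict x J) ` GG K I"
    then obtain x where x: "x \<in> GG K I" and z: "z = restrict x J" by blast
    have "\<forall>C\<in>K-{{}}. C \<subseteq> J \<longrightarrow> (\<exists>i\<in>C. C \<notin> z i)"
    proof (intro ballI impI)
      fix C assume C: "C \<in> K-{{}}" "C \<subseteq> J"
      then obtain i where "i \<in> C" "C \<notin> x i" using x assms unfolding GG_def by blast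
      then show "\<exists>i\<in>C. C \<notin> z i" using C z by auto
    qed
    then show "z \<in> GG K J" unfolding GG_def z by auto
  qed
next
  show "GG K J \<subseteq> (\<lambda>x. restrict x J) ` GG K I"
  proof
    fix y assume y: "y \<in> GG K J"
    define z where "z = (\<lambda>i. if i \<in> I - J then {} else y i)"
    have yext: "\<And>i. i \<notin> J \<Longrightarrow> y i = undefined" using y unfolding GG_def PiE_def extensional_def by auto
    have "z \<in> PiE I (\<lambda>_. UNIV)" using yext assms unfolding z_def PiE_def extensional_def by auto
    moreover have "\<forall>C\<in>K-{{}}. C \<subseteq> I \<longrightarrow> (\<exists>i\<in>C. C \<notin> z i)"
    proof (intro ballI impI)
      fix C assume C: "C \<in> K-{{}}" "C \<subseteq> I"
      show "\<exists>i\<in>C. C \<notin> z i"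
      proof (cases "C \<subseteq> J")
        case True
        then obtain i where "i \<in> C" "C \<notin> y i" using y C unfolding GG_def by blast
        then show ?thesis using True unfolding z_def by auto
      next
        case False
        then obtain i where "i \<in> C" "i \<notin> J" by blast
        then show ?thesis using C unfolding z_def by auto
      qed
    qed
    ultimately have "z \<in> GG K I" unfolding GG_def by auto
    moreover have "restrict z J = y"
    proof (rule ext)
      fix i show "restrict z J i = y i" using yext[of i] by (cases "i \<in> J") (simp_all add: z_def)
    qed
    ultimately show "y \<in> (\<lambda>x. restrict x J) ` GG K I" by force
  qed
qed

lemma in_K_not_scind:
  assumes J: "J \<in> K" and JI: "J \<subseteq> I"
  shows "\<not> scindable I (\<lambda>_. UNIV) (J, GG K J)"
proof
  assume "scindable I (\<lambda>_. UNIV) (J, GG K J)"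
  then obtain K0 L0 R1 R2 where bp: "bipartition J K0 L0" and d1: "dom_rel R1 = K0"
    and d2: "dom_rel R2 = L0" and eq: "(J, GG K J) = prod_rel (\<lambda>_. UNIV) R1 R2"
    unfolding scindable_def dom_rel_def by auto
  from bp obtain a b where a: "a \<in> K0" and b: "b \<in> L0" and dis: "K0 \<inter> L0 = {}" and un: "K0 \<union> L0 = J"
    unfolding bipartition_def by blast
  have Jne: "J \<noteq> {}" using a un by auto
  have G: "GG K J = {x \<in> PiE J (\<lambda>_. UNIV). restrict x K0 \<in> graph_rel R1 \<and> restrict x L0 \<in> graph_rel R2}"
    using eq d1 d2 un unfolding prod_rel_def Zfam_def by auto
  define x where "x = (\<lambda>i. if i \<in> K0 then {} else if i \<in> L0 then {J} else undefined)"
  define y where "y = (\<lambda>i. if i \<in> K0 then {J} else if i \<in> L0 then {} else undefined)"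
  define z where "z = (\<lambda>i. if i \<in> J then {J} else undefined)"
  have xG: "x \<in> GG K J" unfolding GG_def
  proof (intro CollectI conjI ballI impI)
    show "x \<in> PiE J (\<lambda>_. UNIV)" using un unfolding x_def PiE_def extensional_def by auto
    fix C assume C: "C \<in> K-{{}}" "C \<subseteq> J"
    show "\<exists>i\<in>C. C \<notin> x i"
    proof (cases "C = J")
      case True then show ?thesis using a un dis unfolding x_def by (intro bexI[of _ a]) auto
    next
      case False
      from C obtain c where "c \<in> C" by auto
      moreover have "c \<in> K0 \<or> c \<in> L0" using \<open>c \<in> C\<close> C(2) un by blast
      ultimately show ?thesis using False unfolding x_def by (intro bexI[of _ c]) auto
    qed
  qed
  have yG: "y \<in> GG K J" unfolding GG_def
  proof (intro CollectI conjI ballI impI)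
    show "y \<in> PiE J (\<lambda>_. UNIV)" using un unfolding y_def PiE_def extensional_def by auto
    fix C assume C: "C \<in> K-{{}}" "C \<subseteq> J"
    show "\<exists>i\<in>C. C \<notin> y i"
    proof (cases "C = J")
      case True then show ?thesis using b un dis unfolding y_def by (intro bexI[of _ b]) auto
    next
      case False
      from C obtain c where "c \<in> C" by auto
      moreover have "c \<in> K0 \<or> c \<in> L0" using \<open>c \<in> C\<close> C(2) un by blast
      ultimately show ?thesis using False unfolding y_def by (intro bexI[of _ c]) auto
    qed
  qed
  have r1: "restrict z K0 = restrict y K0" using un by (intro ext) (auto simp: z_def y_def restrict_def)
  have r2: "restrict z L0 = restrict x L0" using un dis by (intro ext) (auto simp: z_def x_def restrict_def)
  have "z \<in> PiE J (\<lambda>_. UNIV)" unfolding z_def PiE_def extensional_def by auto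
  hence "z \<in> GG K J" using G xG yG r1 r2 by auto
  moreover have "J \<in> K - {{}}" using J Jne by auto
  ultimately obtain i where "i \<in> J" "J \<notin> z i" unfolding GG_def by blast
  then show False unfolding z_def by auto
qed

lemma notin_K_scind:
  assumes ics: "integral_connective_structure I K" and JI: "J \<subseteq> I" and J: "J \<notin> K"
  shows "scindable I (\<lambda>_. UNIV) (J, GG K J)"
proof -
  have cs: "connective_structure I K" and sing: "\<And>x. x \<in> I \<Longrightarrow> {x} \<in> K"
    using ics unfolding integral_connective_structure_def by auto
  have KP: "K \<subseteq> Pow I" and un: "\<And>\<I>. \<I> \<subseteq> K \<Longrightarrow> \<Inter>\<I> \<noteq> {} \<Longrightarrow> \<Union>\<I> \<in> K"
    using cs unfolding connective_structure_def by auto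
  have "{} \<in> K" using un[of "{}"] by auto
  hence "J \<noteq> {}" using J by auto
  then obtain a where a: "a \<in> J" by blast
  define \<I> where "\<I> = {C \<in> K. a \<in> C \<and> C \<subseteq> J}"
  define K0 where "K0 = \<Union>\<I>"
  have "{a} \<in> \<I>" using sing a JI unfolding \<I>_def by auto
  hence aK0: "a \<in> K0" unfolding K0_def by auto
  have "a \<in> \<Inter>\<I>" unfolding \<I>_def by auto
  hence "\<Inter>\<I> \<noteq> {}" by blast
  moreover have "\<I> \<subseteq> K" unfolding \<I>_def by blast
  ultimately have K0K: "K0 \<in> K" unfolding K0_def using un by blast
  have K0J: "K0 \<subseteq> J" unfolding K0_def \<I>_def by auto
  define L0 where "L0 = J - K0"
  have L0ne: "L0 \<noteq> {}" using K0J K0K J unfolding L0_def by auto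
  have key: "\<And>C. C \<in> K \<Longrightarrow> C \<subseteq> J \<Longrightarrow> C \<subseteq> K0 \<or> C \<subseteq> L0"
  proof -
    fix C assume C: "C \<in> K" "C \<subseteq> J"
    show "C \<subseteq> K0 \<or> C \<subseteq> L0"
    proof (cases "C \<inter> K0 = {}")
      case True then show ?thesis using C unfolding L0_def by auto
    next
      case False
      then obtain c where c: "c \<in> C" "c \<in> K0" by auto
      have "{C, K0} \<subseteq> K" using C K0K by blast
      moreover have "\<Inter>{C, K0} \<noteq> {}" using c by blast
      ultimately have "\<Union>{C, K0} \<in> K" by (rule un)
      hence "C \<union> K0 \<in> \<I>" using aK0 C K0J unfolding \<I>_def by auto
      hence "C \<subseteq> K0" unfolding K0_def by auto
      then show ?thesis by auto
    qed
  qed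
  have bp: "bipartition J K0 L0" unfolding bipartition_def L0_def
    using aK0 L0ne K0J unfolding L0_def by auto
  have m1: "is_mrel I (\<lambda>_. UNIV) (K0, GG K K0)"
    unfolding is_mrel_def dom_rel_def graph_rel_def Zfam_def GG_def using K0J JI by auto
  have m2: "is_mrel I (\<lambda>_. UNIV) (L0, GG K L0)"
    unfolding is_mrel_def dom_rel_def graph_rel_def Zfam_def GG_def using JI unfolding L0_def by auto
  have JU: "K0 \<union> L0 = J" using K0J unfolding L0_def by auto
  have geq: "GG K J = {x \<in> PiE J (\<lambda>_. UNIV). restrict x K0 \<in> GG K K0 \<and> restrict x L0 \<in> GG K L0}"
  proof (intro set_eqI iffI)
    fix x assume x: "x \<in> GG K J"
    have "restrict x K0 \<in> (\<lambda>x. restrict x K0) ` GG K J" using x by blast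
    hence 1: "restrict x K0 \<in> GG K K0" using GG_restr[OF K0J] by simp
    have "restrict x L0 \<in> (\<lambda>x. restrict x L0) ` GG K J" using x by blast
    moreover have "L0 \<subseteq> J" unfolding L0_def by blast
    ultimately have 2: "restrict x L0 \<in> GG K L0" using GG_restr[of L0 J K] by simp
    have "x \<in> PiE J (\<lambda>_. UNIV)" using x unfolding GG_def by blast
    then show "x \<in> {x \<in> PiE J (\<lambda>_. UNIV). restrict x K0 \<in> GG K K0 \<and> restrict x L0 \<in> GG K L0}"
      using 1 2 by blast
  next
    fix x assume x: "x \<in> {x \<in> PiE J (\<lambda>_. UNIV). restrict x K0 \<in> GG K K0 \<and> restrict x L0 \<in> GG K L0}"
    have x1: "restrict x K0 \<in> GG K K0" and x2: "restrict x L0 \<in> GG K L0" using x by simp_all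
    have q1: "\<forall>C\<in>K-{{}}. C \<subseteq> K0 \<longrightarrow> (\<exists>i\<in>C. C \<notin> restrict x K0 i)"
      using GG_mem[OF x1] by blast
    have q2: "\<forall>C\<in>K-{{}}. C \<subseteq> L0 \<longrightarrow> (\<exists>i\<in>C. C \<notin> restrict x L0 i)"
      using GG_mem[OF x2] by blast
    have "\<forall>C\<in>K-{{}}. C \<subseteq> J \<longrightarrow> (\<exists>i\<in>C. C \<notin> x i)"
    proof (intro ballI impI)
      fix C assume C: "C \<in> K-{{}}" "C \<subseteq> J"
      from key[of C] C have "C \<subseteq> K0 \<or> C \<subseteq> L0" by blast
      then show "\<exists>i\<in>C. C \<notin> x i"
      proof
        assume s: "C \<subseteq> K0"
        then obtain i where "i \<in> C" "C \<notin> restrict x K0 i" using q1 C(1) by blast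
        then show ?thesis using s by (intro bexI[of _ i]) auto
      next
        assume s: "C \<subseteq> L0"
        then obtain i where "i \<in> C" "C \<notin> restrict x L0 i" using q2 C(1) by blast
        then show ?thesis using s by (intro bexI[of _ i]) auto
      qed
    qed
    moreover have "x \<in> PiE J (\<lambda>_. UNIV)" using x by blast
    ultimately show "x \<in> GG K J" unfolding GG_def by blast
  qed
  have peq: "(J, GG K J) = prod_rel (\<lambda>_. UNIV) (K0, GG K K0) (L0, GG K L0)"
    unfolding prod_rel_def dom_rel_def graph_rel_def Zfam_def using JU geq by auto
  show ?thesis unfolding scindable_def
    apply (rule exI[of _ K0], rule exI[of _ L0], rule exI[of _ "(K0, GG K K0)"], rule exI[of _ "(L0, GG K L0)"])
    using bp m1 m2 peq[symmetric] by (simp add: dom_rel_def)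
qed

theorem mainTheorem1:
  fixes I :: "'i set"
  shows "\<exists>E :: 'i \<Rightarrow> 'i set set set.
           (\<forall>i\<in>I. E i \<noteq> {}) \<and>
           (\<forall>\<K>. integral_connective_structure I \<K> \<longrightarrow>
              (\<exists>R. is_mrel I E R \<and> conn_struct_of I E R = \<K>))"
proof (intro exI[of _ "\<lambda>_. UNIV"] conjI allI impI)
  show "\<forall>i\<in>I. (UNIV :: 'i set set set) \<noteq> {}" by auto
  fix K :: "'i set set" assume ics: "integral_connective_structure I K"
  have KP: "K \<subseteq> Pow I" using ics unfolding integral_connective_structure_def connective_structure_def by auto
  let ?R = "(I, GG K I)"
  have m: "is_mrel I (\<lambda>_. UNIV) ?R"
    unfolding is_mrel_def dom_rel_def graph_rel_def Zfam_def GG_def by auto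
  have rr: "\<And>J. J \<subseteq> I \<Longrightarrow> restr_rel ?R J = (J, GG K J)"
  proof -
    fix J :: "'i set" assume "J \<subseteq> I"
    then show "restr_rel ?R J = (J, GG K J)"
      unfolding restr_rel_def graph_rel_def using GG_restr[of J I K] by simp
  qed
  have cK: "conn_struct_of I (\<lambda>_. UNIV) ?R = K"
  proof (intro set_eqI iffI)
    fix J assume "J \<in> conn_struct_of I (\<lambda>_. UNIV) ?R"
    hence "J \<subseteq> I" "\<not> scindable I (\<lambda>_. UNIV) (J, GG K J)"
      unfolding conn_struct_of_def dom_rel_def using rr by auto
    then show "J \<in> K" using notin_K_scind[OF ics] by blast
  next
    fix J assume J: "J \<in> K"
    hence "J \<subseteq> I" using KP by auto
    then show "J \<in> conn_struct_of I (\<lambda>_. UNIV) ?R"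
      unfolding conn_struct_of_def dom_rel_def using rr in_K_not_scind[OF J] by auto
  qed
  show "\<exists>R. is_mrel I (\<lambda>_. UNIV :: 'i set set set) R \<and> conn_struct_of I (\<lambda>_. UNIV) R = K"
    by (rule exI[of _ ?R], rule conjI) (fact m, fact cK)
qed

end
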